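(* Let $\tau>0$, $0\le\lambda<1$, $u_n\in\mathcal V_{[0,1]}$, $M:=\mathcal M(u_n)$. Then the problem \[ \min\left\{(1-\lambda)\|u\|_{\mathcal V}^2-2\langle u,e^{-\tau\Delta}u_n\rangle_{\mathcal V}\ :\ u\in\mathcal V_{[0,1]},\ \mathcal M(u)=M\right\} \] has a unique solution $u^\lambda_{n+1}$, given by \[ (u^\lambda _{n+1})_i=\begin{cases} 0, &\text{if } \nu\geq (e^{-\tau\Delta}u_n)_i, \\ \frac{(e^{-\tau\Delta}u_n)_i - \nu}{1-\lambda}, &\text{if } (e^{-\tau\Delta}u_n)_i - (1-\lambda)<\nu<(e^{-\tau\Delta}u_n)_i,\\ 1, &\text{if } \nu \leq (e^{-\tau\Delta}u_n)_i - (1-\lambda), \end{cases} \] where $\nu$ is a solution of \[ M = \sum_{\alpha \in A} a_{\alpha} \begin{cases} 1, & \nu \leq \alpha -(1-\lambda),\\ \frac{\alpha-\nu}{1-\lambda}, & \alpha-(1-\lambda)<\nu < \alpha,\\ 0, &\nu\geq \alpha; \end{cases} \] such a $\nu$ can be taken in $[0,\lambda]$.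
   Context: $G=(V,E)$ is a finite, simple, connected, undirected graph with weights $\omega_{ij}=\omega_{ji}>0$ for $ij\in E$, $\omega_{ij}=0$ otherwise; $d_i=\sum_j\omega_{ij}$, $r\in[0,1]$ fixed. $\mathcal V$ = functions $V\to\mathbb R$ with $\langle u,v\rangle_{\mathcal V}=\sum_i u_iv_id_i^r$ and norm $\|\cdot\|_{\mathcal V}$; $\mathcal V_{[0,1]}$ = functions $V\to[0,1]$. $(\Delta u)_i=d_i^{-r}\sum_j\omega_{ij}(u_i-u_j)$, $e^{-\tau\Delta}$ its matrix exponential. $\mathbf 1$ all-ones; $\mathcal M(u)=\langle u,\mathbf 1\rangle_{\mathcal V}$. $A$ is the set of values of $e^{-\tau\Delta}u_n$, and $a_\alpha:=\sum_{i:(e^{-\tau\Delta}u_n)_i=\alpha}d_i^r$. *)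

theory Defs
  imports "HOL-Analysis.Analysis"
begin

definition weighted_graph :: "('v::finite \<Rightarrow> 'v \<Rightarrow> real) \<Rightarrow> bool" where
  "weighted_graph w \<longleftrightarrow>
     (\<forall>i j. w i j = w j i) \<and> (\<forall>i j. w i j \<ge> 0) \<and> (\<forall>i. w i i = 0)
     \<and> (\<forall>i j. (\<lambda>x y. w x y > 0)\<^sup>*\<^sup>* i j)"

definition deg :: "('v::finite \<Rightarrow> 'v \<Rightarrow> real) \<Rightarrow> 'v \<Rightarrow> real" where
  "deg w i = (\<Sum>j\<in>UNIV. w i j)"

definition ipV :: "('v::finite \<Rightarrow> 'v \<Rightarrow> real) \<Rightarrow> real \<Rightarrow> ('v \<Rightarrow> real) \<Rightarrow> ('v \<Rightarrow> real) \<Rightarrow> real" where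
  "ipV w r u v = (\<Sum>i\<in>UNIV. u i * v i * deg w i powr r)"

definition normV_sq :: "('v::finite \<Rightarrow> 'v \<Rightarrow> real) \<Rightarrow> real \<Rightarrow> ('v \<Rightarrow> real) \<Rightarrow> real" where
  "normV_sq w r u = ipV w r u u"

definition mass :: "('v::finite \<Rightarrow> 'v \<Rightarrow> real) \<Rightarrow> real \<Rightarrow> ('v \<Rightarrow> real) \<Rightarrow> real" where
  "mass w r u = ipV w r u (\<lambda>_. 1)"

definition graph_laplacian :: "('v::finite \<Rightarrow> 'v \<Rightarrow> real) \<Rightarrow> real \<Rightarrow> ('v \<Rightarrow> real) \<Rightarrow> ('v \<Rightarrow> real)" where
  "graph_laplacian w r u = (\<lambda>i. deg w i powr (- r) * (\<Sum>j\<in>UNIV. w i j * (u i - u j)))"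

definition heat :: "('v::finite \<Rightarrow> 'v \<Rightarrow> real) \<Rightarrow> real \<Rightarrow> real \<Rightarrow> ('v \<Rightarrow> real) \<Rightarrow> ('v \<Rightarrow> real)" where
  "heat w r \<tau> u = (\<lambda>i. (\<Sum>k. ((- \<tau>) ^ k / fact k) * ((graph_laplacian w r ^^ k) u) i))"

definition V01 :: "('v \<Rightarrow> real) set" where
  "V01 = {u. \<forall>i. 0 \<le> u i \<and> u i \<le> 1}"

definition clip_profile :: "real \<Rightarrow> real \<Rightarrow> real \<Rightarrow> real" where
  "clip_profile lam x \<nu> =
     (if \<nu> \<ge> x then 0
      else if \<nu> \<le> x - (1 - lam) then 1
      else (x - \<nu>) / (1 - lam))"

end

theory Submission
  imports Defs
begin


lemma deg_pos:
  fixes w :: "'v::finite \<Rightarrow> 'v \<Rightarrow> real"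
  assumes wg: "weighted_graph w" and c2: "CARD('v) \<ge> 2"
  shows "deg w i > 0"
proof -
  obtain j where "j \<noteq> i"
  proof -
    have "UNIV \<noteq> {i}" using c2 by (metis card.empty card_insert_disjoint empty_iff finite.emptyI le_antisym not_less_eq_eq numeral_2_eq_2 one_le_numeral order_refl)
    then show ?thesis using that by blast
  qed
  have rt: "(\<lambda>x y. w x y > 0)\<^sup>*\<^sup>* i j" using wg unfolding weighted_graph_def by blast
  obtain k where k: "w i k > 0"
    using rt \<open>j \<noteq> i\<close> by (cases rule: converse_rtranclpE) auto
  have nn: "\<And>a b. w a b \<ge> 0" using wg unfolding weighted_graph_def by blast
  have "w i k \<le> (\<Sum>j\<in>UNIV. w i j)"
    by (rule member_le_sum) (auto simp: nn)
  then show ?thesis using k unfolding deg_def by linarith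
qed

lemma deg_nonneg:
  fixes w :: "'v::finite \<Rightarrow> 'v \<Rightarrow> real"
  assumes wg: "weighted_graph w"
  shows "deg w i \<ge> 0"
  using wg unfolding weighted_graph_def deg_def by (simp add: sum_nonneg)

lemma lap_expand:
  "graph_laplacian w r v i = deg w i powr (-r) * (deg w i * v i - (\<Sum>j\<in>UNIV. w i j * v j))"
  unfolding graph_laplacian_def deg_def
  by (simp add: algebra_simps sum_subtractf sum_distrib_left sum_distrib_right)

definition cmax :: "('v::finite \<Rightarrow> 'v \<Rightarrow> real) \<Rightarrow> real \<Rightarrow> real" where
  "cmax w r = (\<Sum>i\<in>UNIV. deg w i powr (-r) * deg w i)"

definition Qop :: "('v::finite \<Rightarrow> 'v \<Rightarrow> real) \<Rightarrow> real \<Rightarrow> ('v \<Rightarrow> real) \<Rightarrow> ('v \<Rightarrow> real)" where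
  "Qop w r v = (\<lambda>i. (cmax w r - deg w i powr (-r) * deg w i) * v i + deg w i powr (-r) * (\<Sum>j\<in>UNIV. w i j * v j))"

definition nm :: "('v::finite \<Rightarrow> real) \<Rightarrow> real" where
  "nm v = (\<Sum>j\<in>UNIV. \<bar>v j\<bar>)"

lemma nm_ge: "\<bar>v i\<bar> \<le> nm v"
  unfolding nm_def by (rule member_le_sum) auto

lemma nm_nonneg: "nm v \<ge> 0"
  unfolding nm_def by (simp add: sum_nonneg)

lemma lap_Q: "graph_laplacian w r v i = cmax w r * v i - Qop w r v i"
  unfolding lap_expand Qop_def by (simp add: algebra_simps)

lemma ci_le_cmax:
  fixes w :: "'v::finite \<Rightarrow> 'v \<Rightarrow> real"
  assumes wg: "weighted_graph w"
  shows "deg w i powr (-r) * deg w i \<le> cmax w r" "0 \<le> deg w i powr (-r) * deg w i"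
proof -
  show "deg w i powr (-r) * deg w i \<le> cmax w r"
    unfolding cmax_def by (rule member_le_sum) (auto intro!: mult_nonneg_nonneg deg_nonneg[OF wg])
  show "0 \<le> deg w i powr (-r) * deg w i"
    by (auto intro!: mult_nonneg_nonneg deg_nonneg[OF wg])
qed

lemma wnn: "weighted_graph w \<Longrightarrow> w a b \<ge> 0"
  unfolding weighted_graph_def by blast

lemma Q_mono:
  fixes w :: "'v::finite \<Rightarrow> 'v \<Rightarrow> real"
  assumes wg: "weighted_graph w" and le: "\<And>j. v j \<le> v' j"
  shows "Qop w r v i \<le> Qop w r v' i"
  unfolding Qop_def
  using ci_le_cmax[OF wg, of i r] le
  by (auto intro!: add_mono mult_left_mono sum_mono wnn[OF wg])

lemma Q_zero: "Qop w r (\<lambda>_. 0) i = 0"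
  unfolding Qop_def by simp

lemma Q_one: "Qop w r (\<lambda>_. 1) i = cmax w r"
  unfolding Qop_def deg_def by (simp add: algebra_simps)

lemma Q_sum:
  "finite S \<Longrightarrow> Qop w r (\<lambda>i. \<Sum>s\<in>S. f s i) = (\<lambda>i. \<Sum>s\<in>S. Qop w r (f s) i)"
  unfolding Qop_def
  by (auto simp: sum_distrib_left sum.distrib intro!: ext arg_cong2[where f="(+)"] sum.swap)

lemma Q_scale: "Qop w r (\<lambda>i. a * v i) = (\<lambda>i. a * Qop w r v i)"
  unfolding Qop_def
  by (auto simp: sum_distrib_left algebra_simps intro!: ext)

lemma Q_bound:
  fixes w :: "'v::finite \<Rightarrow> 'v \<Rightarrow> real"
  assumes wg: "weighted_graph w"
  shows "\<bar>Qop w r v i\<bar> \<le> (2 * cmax w r) * nm v"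
proof -
  have a: "\<bar>(cmax w r - deg w i powr (-r) * deg w i) * v i\<bar> \<le> cmax w r * nm v"
    using ci_le_cmax[OF wg, of i r] nm_ge[of v i] nm_nonneg[of v]
    by (auto simp: abs_mult intro!: mult_mono)
  have "\<bar>\<Sum>j\<in>UNIV. w i j * v j\<bar> \<le> (\<Sum>j\<in>UNIV. w i j * nm v)"
    by (rule order_trans[OF sum_abs]) (auto simp: abs_mult wnn[OF wg] intro!: sum_mono mult_left_mono nm_ge)
  also have "\<dots> = deg w i * nm v" unfolding deg_def by (simp add: sum_distrib_right)
  finally have "\<bar>deg w i powr (-r) * (\<Sum>j\<in>UNIV. w i j * v j)\<bar> \<le> deg w i powr (-r) * (deg w i * nm v)"
    by (simp add: abs_mult mult_left_mono)
  also have "\<dots> \<le> cmax w r * nm v"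
    using ci_le_cmax[OF wg, of i r] nm_nonneg[of v] by (simp add: mult.assoc[symmetric] mult_right_mono)
  finally have b: "\<bar>deg w i powr (-r) * (\<Sum>j\<in>UNIV. w i j * v j)\<bar> \<le> cmax w r * nm v" .
  show ?thesis unfolding Qop_def using a b abs_triangle_ineq[of "(cmax w r - deg w i powr (-r) * deg w i) * v i" "deg w i powr (-r) * (\<Sum>j\<in>UNIV. w i j * v j)"]
    by linarith
qed

lemma cmax_nonneg: "weighted_graph w \<Longrightarrow> cmax w r \<ge> 0"
  using ci_le_cmax(1,2) by (meson order_trans)

lemma lap_bound:
  fixes w :: "'v::finite \<Rightarrow> 'v \<Rightarrow> real"
  assumes wg: "weighted_graph w"
  shows "\<bar>graph_laplacian w r v i\<bar> \<le> (3 * cmax w r) * nm v"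
proof -
  have "\<bar>cmax w r * v i\<bar> \<le> cmax w r * nm v"
    using cmax_nonneg[OF wg, of r] nm_ge[of v i] by (simp add: abs_mult mult_left_mono)
  then show ?thesis unfolding lap_Q using Q_bound[OF wg, of r v i] by linarith
qed

lemma funpow_bound:
  fixes F :: "('v::finite \<Rightarrow> real) \<Rightarrow> ('v \<Rightarrow> real)"
  assumes b: "\<And>v i. \<bar>F v i\<bar> \<le> K * nm v" and K: "K \<ge> 0"
  shows "\<bar>(F^^k) u i\<bar> \<le> (real CARD('v) * K)^k * nm u"
proof -
  have "nm ((F^^k) u) \<le> (real CARD('v) * K)^k * nm u"
  proof (induction k)
    case 0 then show ?case by simp
  next
    case (Suc k)
    have "nm ((F^^Suc k) u) = (\<Sum>j\<in>UNIV. \<bar>F ((F^^k) u) j\<bar>)" by (simp add: nm_def)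
    also have "\<dots> \<le> (\<Sum>j\<in>(UNIV::'v set). K * nm ((F^^k) u))" by (rule sum_mono) (rule b)
    also have "\<dots> = real CARD('v) * K * nm ((F^^k) u)" by simp
    also have "\<dots> \<le> real CARD('v) * K * ((real CARD('v) * K)^k * nm u)"
      using Suc K by (intro mult_left_mono) auto
    finally show ?case by (simp add: algebra_simps)
  qed
  then show ?thesis using nm_ge[of "(F^^k) u" i] by linarith
qed

lemma funpow_summable:
  fixes F :: "('v::finite \<Rightarrow> real) \<Rightarrow> ('v \<Rightarrow> real)"
  assumes b: "\<And>v i. \<bar>F v i\<bar> \<le> K * nm v" and K: "K \<ge> 0"
  shows "summable (\<lambda>k. \<bar>t^k / fact k * (F^^k) u i\<bar>)"
proof (rule summable_comparison_test)
  let ?x = "\<bar>t\<bar> * (real CARD('v) * K)"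
  show "summable (\<lambda>k. nm u * (inverse (fact k) * ?x^k))"
    by (intro summable_mult summable_exp)
  show "\<exists>N. \<forall>n\<ge>N. norm \<bar>t^n / fact n * (F^^n) u i\<bar> \<le> nm u * (inverse (fact n) * ?x^n)"
  proof (intro exI allI impI)
    fix n :: nat
    have "norm \<bar>t^n / fact n * (F^^n) u i\<bar> = \<bar>t\<bar>^n / fact n * \<bar>(F^^n) u i\<bar>"
      by (simp add: abs_mult power_abs)
    also have "\<dots> \<le> \<bar>t\<bar>^n / fact n * ((real CARD('v) * K)^n * nm u)"
      by (intro mult_left_mono funpow_bound[OF b K]) auto
    also have "\<dots> = nm u * (inverse (fact n) * ?x^n)"
      by (simp add: power_mult_distrib field_simps)
    finally show "norm \<bar>t^n / fact n * (F^^n) u i\<bar> \<le> nm u * (inverse (fact n) * ?x^n)" .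
  qed
qed



lemma binom_op:
  fixes P :: "('v \<Rightarrow> real) \<Rightarrow> ('v \<Rightarrow> real)"
  assumes Psum: "\<And>(S::nat set) f. finite S \<Longrightarrow> P (\<lambda>i. \<Sum>s\<in>S. f s i) = (\<lambda>i. \<Sum>s\<in>S. P (f s) i)"
    and Pscale: "\<And>a v. P (\<lambda>i. a * v i) = (\<lambda>i. a * P v i)"
  shows "((\<lambda>v i. P v i + b * v i)^^k) u = (\<lambda>i. \<Sum>j\<le>k. (real (k choose j) * b^(k-j)) * (P^^j) u i)"
proof (induction k)
  case 0 then show ?case by simp
next
  case (Suc k)
  let ?R = "\<lambda>j. (P^^j) u"
  have PS: "P (\<lambda>i. \<Sum>j\<le>k. (real (k choose j) * b^(k-j)) * ?R j i) =
        (\<lambda>i. \<Sum>j\<le>k. (real (k choose j) * b^(k-j)) * ?R (Suc j) i)"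
  proof -
    have "P (\<lambda>i. \<Sum>j\<le>k. (real (k choose j) * b^(k-j)) * ?R j i) =
        (\<lambda>i. \<Sum>j\<le>k. P (\<lambda>i. (real (k choose j) * b^(k-j)) * ?R j i) i)"
      using Psum[of "{..k}" "\<lambda>j i. (real (k choose j) * b^(k-j)) * ?R j i"] by simp
    then show ?thesis by (simp add: Pscale)
  qed
  show ?case
  proof (rule ext)
    fix i
    have "((\<lambda>v i. P v i + b * v i)^^Suc k) u i =
       (\<Sum>j\<le>k. (real (k choose j) * b^(k-j)) * ?R (Suc j) i) + b * (\<Sum>j\<le>k. (real (k choose j) * b^(k-j)) * ?R j i)"
      using Suc PS by simp
    also have "b * (\<Sum>j\<le>k. (real (k choose j) * b^(k-j)) * ?R j i) = (\<Sum>j\<le>k. (real (k choose j) * b^(Suc k-j)) * ?R j i)"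
      by (auto simp: sum_distrib_left Suc_diff_le intro!: sum.cong)
    also have "\<dots> = b^Suc k * ?R 0 i + (\<Sum>j<k. (real (k choose Suc j) * b^(k-j)) * ?R (Suc j) i)"
      by (simp add: sum.atMost_shift)
    also have "(\<Sum>j<k. (real (k choose Suc j) * b^(k-j)) * ?R (Suc j) i) = (\<Sum>j\<le>k. (real (k choose Suc j) * b^(k-j)) * ?R (Suc j) i)"
      by (simp add: lessThan_Suc_atMost[symmetric])
    finally have L: "((\<lambda>v i. P v i + b * v i)^^Suc k) u i =
       (\<Sum>j\<le>k. (real (k choose j) * b^(k-j)) * ?R (Suc j) i) + (b^Suc k * ?R 0 i + (\<Sum>j\<le>k. (real (k choose Suc j) * b^(k-j)) * ?R (Suc j) i))" .
    have "(\<Sum>j\<le>Suc k. (real (Suc k choose j) * b^(Suc k-j)) * ?R j i) =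
        b^Suc k * ?R 0 i + (\<Sum>j\<le>k. (real (Suc k choose Suc j) * b^(k-j)) * ?R (Suc j) i)"
      unfolding sum.atMost_Suc_shift by simp
    also have "(\<Sum>j\<le>k. (real (Suc k choose Suc j) * b^(k-j)) * ?R (Suc j) i) =
       (\<Sum>j\<le>k. (real (k choose j) * b^(k-j)) * ?R (Suc j) i) + (\<Sum>j\<le>k. (real (k choose Suc j) * b^(k-j)) * ?R (Suc j) i)"
      by (simp add: sum.distrib[symmetric] algebra_simps)
    finally show "((\<lambda>v i. P v i + b * v i)^^Suc k) u i = (\<Sum>j\<le>Suc k. (real (Suc k choose j) * b^(Suc k-j)) * ?R j i)"
      using L by simp
  qed
qed



lemma lap_scale: "graph_laplacian w r (\<lambda>i. a * v i) = (\<lambda>i. a * graph_laplacian w r v i)"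
  by (rule ext) (simp add: lap_Q Q_scale algebra_simps)

lemma lap_pow:
  "(graph_laplacian w r ^^ k) u = (\<lambda>i. (-1)^k * (((\<lambda>v i. Qop w r v i + (- cmax w r) * v i)^^k) u i))"
proof (induction k)
  case 0 then show ?case by simp
next
  case (Suc k)
  show ?case
    by (rule ext) (simp add: Suc lap_scale, simp add: lap_Q algebra_simps)
qed

lemma heat_cauchy:
  fixes w :: "'v::finite \<Rightarrow> 'v \<Rightarrow> real"
  assumes wg: "weighted_graph w"
  shows "heat w r \<tau> u i = (\<Sum>j. \<tau>^j / fact j * (Qop w r ^^ j) u i) * exp (- cmax w r * \<tau>)"
proof -
  let ?c = "cmax w r"
  let ?R = "\<lambda>j. (Qop w r ^^ j) u i"
  define a where "a = (\<lambda>j. \<tau>^j / fact j * ?R j)"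
  define b where "b = (\<lambda>m. (- ?c * \<tau>)^m / fact m)"
  have c0: "?c \<ge> 0" using cmax_nonneg[OF wg] .
  have sa: "summable (\<lambda>k. norm (a k))"
    unfolding a_def real_norm_def
    by (rule funpow_summable[where K="2 * ?c"]) (use Q_bound[OF wg] c0 in auto)
  have sb: "summable (\<lambda>k. norm (b k))"
    unfolding b_def using summable_exp[of "\<bar>?c * \<tau>\<bar>"]
    by (simp add: abs_mult power_abs divide_inverse mult.commute)
  have bsum: "suminf b = exp (- ?c * \<tau>)"
    using exp_converges[of "- ?c * \<tau>"] unfolding b_def
    by (simp add: sums_iff divide_inverse mult.commute)
  have sgn: "(- \<tau>)^k / fact k * ((-1)^k * x) = \<tau>^k / fact k * x" for k and x :: real
  proof -
    have "(- \<tau>)^k * (-1)^k = \<tau>^k" by (metis mult_minus1_right minus_minus power_mult_distrib)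
    then show ?thesis by (metis (no_types, lifting) mult.assoc times_divide_eq_left)
  qed
  have trm: "(- \<tau>)^k / fact k * (graph_laplacian w r ^^ k) u i = (\<Sum>j\<le>k. a j * b (k - j))" for k
  proof -
    have "(- \<tau>)^k / fact k * (graph_laplacian w r ^^ k) u i
        = \<tau>^k / fact k * (\<Sum>j\<le>k. (real (k choose j) * (- ?c)^(k-j)) * ?R j)"
      unfolding lap_pow
      apply (subst binom_op[where P="Qop w r"])
      using Q_sum Q_scale apply blast
      using Q_scale apply blast
      using sgn by simp
    also have "\<dots> = (\<Sum>j\<le>k. a j * b (k - j))"
      unfolding sum_distrib_left a_def b_def
    proof (rule sum.cong)
      fix j assume "j \<in> {..k}"
      then have jk: "j \<le> k" by simp
      have tk: "\<tau>^k = \<tau>^j * \<tau>^(k-j)" using jk by (simp add: power_add[symmetric])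
      have pm: "(- ?c * \<tau>)^(k-j) = (- ?c)^(k-j) * \<tau>^(k-j)" by (metis mult_minus_left power_mult_distrib)
      have bf: "real (k choose j) = fact k / (fact j * fact (k-j))" using binomial_fact[OF jk] by simp
      have fk: "fact k \<noteq> (0::real)" by simp
      show "\<tau>^k / fact k * (real (k choose j) * (- ?c)^(k-j) * ?R j) =
            \<tau>^j / fact j * ?R j * ((- ?c * \<tau>)^(k-j) / fact (k-j))"
        unfolding pm bf tk using fk by (simp add: field_simps)
    qed simp
    finally show ?thesis .
  qed
  have "heat w r \<tau> u i = (\<Sum>k. \<Sum>j\<le>k. a j * b (k - j))"
    unfolding heat_def using trm by simp
  also have "\<dots> = suminf a * suminf b"
    by (rule Cauchy_product[symmetric, OF sa sb])
  finally show ?thesis unfolding bsum a_def .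
qed



lemma Q_bounds1:
  fixes w :: "'v::finite \<Rightarrow> 'v \<Rightarrow> real"
  assumes wg: "weighted_graph w" and b: "\<And>i. 0 \<le> v i \<and> v i \<le> B"
  shows "0 \<le> Qop w r v i \<and> Qop w r v i \<le> cmax w r * B"
proof
  show "0 \<le> Qop w r v i" using Q_mono[OF wg, of "\<lambda>_. 0" v r i] b by (simp add: Q_zero)
  have e: "Qop w r (\<lambda>_. B) = (\<lambda>i. B * Qop w r (\<lambda>_. 1) i)" using Q_scale[of w r B "\<lambda>_. 1"] by simp
  show "Qop w r v i \<le> cmax w r * B" using Q_mono[OF wg, of v "\<lambda>_. B" r i] b by (simp add: e Q_one mult.commute)
qed

lemma Q_pow_bounds:
  fixes w :: "'v::finite \<Rightarrow> 'v \<Rightarrow> real"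
  assumes wg: "weighted_graph w" and u: "\<And>i. 0 \<le> u i \<and> u i \<le> 1"
  shows "0 \<le> (Qop w r ^^ j) u i \<and> (Qop w r ^^ j) u i \<le> cmax w r ^ j"
proof (induction j arbitrary: i)
  case 0 then show ?case using u by simp
next
  case (Suc j)
  show ?case using Q_bounds1[OF wg, of "(Qop w r ^^ j) u" "cmax w r ^ j" r i] Suc by simp
qed

lemma heat_bounds:
  fixes w :: "'v::finite \<Rightarrow> 'v \<Rightarrow> real"
  assumes wg: "weighted_graph w" and u: "\<And>i. 0 \<le> u i \<and> u i \<le> 1" and t: "\<tau> \<ge> 0"
  shows "0 \<le> heat w r \<tau> u i \<and> heat w r \<tau> u i \<le> 1"
proof -
  let ?c = "cmax w r"
  define a where "a = (\<lambda>j. \<tau>^j / fact j * (Qop w r ^^ j) u i)"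
  have c0: "?c \<ge> 0" using cmax_nonneg[OF wg] .
  have "summable (\<lambda>k. \<bar>a k\<bar>)"
    unfolding a_def
    by (rule funpow_summable[where K="2 * ?c"]) (use Q_bound[OF wg] c0 in auto)
  then have sa: "a sums suminf a" using summable_rabs_cancel summable_sums by blast
  have an: "0 \<le> a j" for j unfolding a_def using Q_pow_bounds[OF wg u, where r=r and j=j and i=i] t by simp
  have S0: "0 \<le> suminf a" using sa an by (metis sums_le sums_zero)
  have "(\<lambda>n. (?c * \<tau>)^n /\<^sub>R fact n) sums exp (?c * \<tau>)" by (rule exp_converges)
  then have ex: "(\<lambda>n. \<tau>^n / fact n * ?c^n) sums exp (?c * \<tau>)"
    by (simp add: power_mult_distrib divide_inverse mult_ac)
  have "a n \<le> \<tau>^n / fact n * ?c^n" for n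
    unfolding a_def using Q_pow_bounds[OF wg u, where r=r and j=n and i=i] t by (intro mult_left_mono) auto
  then have S1: "suminf a \<le> exp (?c * \<tau>)" using sums_le[OF _ sa ex] by blast
  have h: "heat w r \<tau> u i = suminf a * exp (- ?c * \<tau>)" unfolding a_def by (rule heat_cauchy[OF wg])
  have "suminf a * exp (- ?c * \<tau>) \<le> exp (?c * \<tau>) * exp (- ?c * \<tau>)"
    using S1 by (intro mult_right_mono) auto
  also have "\<dots> = 1" by (simp add: exp_minus_inverse)
  finally show ?thesis unfolding h using S0 by simp
qed

lemma lap_mass_zero:
  fixes w :: "'v::finite \<Rightarrow> 'v \<Rightarrow> real"
  assumes wg: "weighted_graph w" and c2: "CARD('v) \<ge> 2"
  shows "(\<Sum>i\<in>UNIV. graph_laplacian w r v i * deg w i powr r) = 0"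
proof -
  have sym: "\<And>a b. w a b = w b a" using wg unfolding weighted_graph_def by blast
  have "graph_laplacian w r v i * deg w i powr r = (\<Sum>j\<in>UNIV. w i j * (v i - v j))" for i
  proof -
    have "deg w i powr (-r) * deg w i powr r = 1"
      using deg_pos[OF wg c2, of i] by (simp add: powr_add[symmetric])
    then show ?thesis unfolding graph_laplacian_def by (metis mult.assoc mult.commute mult.left_neutral)
  qed
  then have "(\<Sum>i\<in>UNIV. graph_laplacian w r v i * deg w i powr r) = (\<Sum>i\<in>UNIV. \<Sum>j\<in>UNIV. w i j * (v i - v j))"
    by simp
  also have "\<dots> = (\<Sum>i\<in>UNIV. \<Sum>j\<in>UNIV. w i j * v i) - (\<Sum>i\<in>UNIV. \<Sum>j\<in>UNIV. w i j * v j)"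
    by (simp add: right_diff_distrib sum_subtractf)
  also have "(\<Sum>i\<in>UNIV. \<Sum>j\<in>UNIV. w i j * v j) = (\<Sum>j\<in>UNIV. \<Sum>i\<in>UNIV. w i j * v j)"
    by (rule sum.swap)
  also have "\<dots> = (\<Sum>i\<in>UNIV. \<Sum>j\<in>UNIV. w i j * v i)"
    by (simp add: sym)
  finally show ?thesis by simp
qed

lemma heat_mass:
  fixes w :: "'v::finite \<Rightarrow> 'v \<Rightarrow> real"
  assumes wg: "weighted_graph w" and c2: "CARD('v) \<ge> 2"
  shows "mass w r (heat w r \<tau> u) = mass w r u"
proof -
  define h where "h = (\<lambda>i k. (- \<tau>)^k / fact k * (graph_laplacian w r ^^ k) u i)"
  have c0: "cmax w r \<ge> 0" using cmax_nonneg[OF wg] .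
  have sh: "summable (h i)" for i
  proof -
    have "summable (\<lambda>k. \<bar>h i k\<bar>)"
      unfolding h_def
      by (rule funpow_summable[where K="3 * cmax w r"]) (use lap_bound[OF wg] c0 in auto)
    then show ?thesis using summable_rabs_cancel by blast
  qed
  have "mass w r (heat w r \<tau> u) = (\<Sum>i\<in>UNIV. suminf (h i) * deg w i powr r)"
    unfolding mass_def ipV_def heat_def h_def by simp
  also have "\<dots> = (\<Sum>i\<in>UNIV. \<Sum>k. h i k * deg w i powr r)"
    using sh by (simp add: suminf_mult2)
  also have "\<dots> = (\<Sum>k. \<Sum>i\<in>UNIV. h i k * deg w i powr r)"
    by (rule suminf_sum[symmetric]) (use sh summable_mult2 in blast)
  also have "\<dots> = (\<Sum>k\<in>{0}. \<Sum>i\<in>UNIV. h i k * deg w i powr r)"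
  proof (rule suminf_finite)
    fix k assume "k \<notin> {0::nat}"
    then obtain m where k: "k = Suc m" by (cases k) auto
    have "(\<Sum>i\<in>UNIV. h i k * deg w i powr r) =
       (- \<tau>)^k / fact k * (\<Sum>i\<in>UNIV. graph_laplacian w r ((graph_laplacian w r ^^ m) u) i * deg w i powr r)"
      unfolding h_def k by (simp add: sum_distrib_left mult_ac)
    then show "(\<Sum>i\<in>UNIV. h i k * deg w i powr r) = 0" by (simp add: lap_mass_zero[OF wg c2])
  qed simp
  also have "\<dots> = mass w r u" unfolding h_def mass_def ipV_def by simp
  finally show ?thesis .
qed



lemma clip_eq:
  assumes "lam < 1"
  shows "clip_profile lam x \<nu> = max 0 (min 1 ((x - \<nu>) / (1 - lam)))"
proof -
  have p: "1 - lam > 0" using assms by simp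
  show ?thesis
    unfolding clip_profile_def using p
    by (auto simp: field_simps min_def max_def)
qed

lemma clip_01:
  assumes "lam < 1"
  shows "0 \<le> clip_profile lam x \<nu> \<and> clip_profile lam x \<nu> \<le> 1"
  unfolding clip_eq[OF assms] by auto

lemma coord:
  fixes v lam x \<nu> :: real
  assumes v: "0 \<le> v" "v \<le> 1" and l: "0 \<le> lam" "lam < 1"
  defines "u \<equiv> clip_profile lam x \<nu>"
  shows "(1-lam) * v^2 - 2 * v * x + 2 * \<nu> * v \<ge> (1-lam) * u^2 - 2 * u * x + 2 * \<nu> * u + (1-lam) * (v-u)^2"
proof -
  have id: "((1-lam) * v^2 - 2 * v * x + 2 * \<nu> * v) - ((1-lam) * u^2 - 2 * u * x + 2 * \<nu> * u + (1-lam) * (v-u)^2)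
      = 2 * ((v - u) * ((1-lam) * u - x + \<nu>))"
    by (simp add: algebra_simps power2_eq_square)
  have "(v - u) * ((1-lam) * u - x + \<nu>) \<ge> 0"
  proof (cases "\<nu> \<ge> x")
    case True
    then have "u = 0" unfolding u_def clip_profile_def by simp
    then show ?thesis using True v by simp
  next
    case F1: False
    show ?thesis
    proof (cases "\<nu> \<le> x - (1 - lam)")
      case True
      then have "u = 1" unfolding u_def clip_profile_def using F1 by simp
      then show ?thesis using True v by (auto intro: mult_nonpos_nonpos)
    next
      case False
      then have "u = (x - \<nu>) / (1 - lam)" unfolding u_def clip_profile_def using F1 by simp
      then have "(1-lam) * u = x - \<nu>" using l by simp
      then show ?thesis by simp
    qed
  qed
  then show ?thesis using id by linarith
qed

theorem theorem29:
  fixes w :: "'v::finite \<Rightarrow> 'v \<Rightarrow> real"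
    and r \<tau> lam :: real and un :: "'v \<Rightarrow> real"
  assumes "weighted_graph w" and "CARD('v) \<ge> 2"
    and "0 \<le> r" and "r \<le> 1"
    and "\<tau> > 0" and "0 \<le> lam" and "lam < 1"
    and "un \<in> V01"
  defines "M \<equiv> mass w r un"
    and "U \<equiv> heat w r \<tau> un"
    and "J \<equiv> (\<lambda>u. (1 - lam) * normV_sq w r u - 2 * ipV w r u (heat w r \<tau> un))"
    and "A \<equiv> range (heat w r \<tau> un)"
    and "a \<equiv> (\<lambda>\<alpha>. \<Sum>i\<in>{i. heat w r \<tau> un i = \<alpha>}. deg w i powr r)"
  shows "(\<exists>\<nu>. 0 \<le> \<nu> \<and> \<nu> \<le> lam \<and> M = (\<Sum>\<alpha>\<in>A. a \<alpha> * clip_profile lam \<alpha> \<nu>))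
       \<and> (\<forall>\<nu>. M = (\<Sum>\<alpha>\<in>A. a \<alpha> * clip_profile lam \<alpha> \<nu>) \<longrightarrow>
            (let u' = (\<lambda>i. clip_profile lam (U i) \<nu>) in
               u' \<in> V01 \<and> mass w r u' = M \<and>
               (\<forall>v. v \<in> V01 \<and> mass w r v = M \<and> v \<noteq> u' \<longrightarrow> J u' < J v)))"
proof -
  note wg = assms(1) and c2 = assms(2) and l0 = assms(6) and l1 = assms(7)
  define d where "d = (\<lambda>i. deg w i powr r)"
  have dpos: "d i > 0" for i unfolding d_def using deg_pos[OF wg c2, of i] by simp
  have u01: "\<And>i. 0 \<le> un i \<and> un i \<le> 1" using assms(8) unfolding V01_def by blast
  have U01: "0 \<le> U i \<and> U i \<le> 1" for i
    unfolding U_def using heat_bounds[OF wg u01] assms(5) by simp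
  have UM: "(\<Sum>i\<in>UNIV. U i * d i) = M"
    using heat_mass[OF wg c2, of r \<tau> un] unfolding M_def U_def mass_def ipV_def d_def by simp
  have regroup: "(\<Sum>\<alpha>\<in>A. a \<alpha> * g \<alpha>) = (\<Sum>i\<in>UNIV. d i * g (U i))" for g
  proof -
    have "(\<Sum>i\<in>UNIV. d i * g (U i)) = (\<Sum>y\<in>U ` UNIV. \<Sum>i\<in>{x\<in>UNIV. U x = y}. d i * g (U i))"
      by (rule sum.image_gen) simp
    also have "\<dots> = (\<Sum>y\<in>A. a y * g y)"
      unfolding A_def a_def U_def d_def
      by (rule sum.cong) (auto simp: sum_distrib_right)
    finally show ?thesis by simp
  qed
  define F where "F = (\<lambda>\<nu>. \<Sum>i\<in>UNIV. d i * clip_profile lam (U i) \<nu>)"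
  have FF: "(\<Sum>\<alpha>\<in>A. a \<alpha> * clip_profile lam \<alpha> \<nu>) = F \<nu>" for \<nu>
    unfolding F_def by (rule regroup)
  have part1: "\<exists>\<nu>. 0 \<le> \<nu> \<and> \<nu> \<le> lam \<and> F \<nu> = M"
  proof (rule IVT2')
    show "continuous_on {0..lam} F"
      unfolding F_def clip_eq[OF l1] by (intro continuous_intros) (use l1 in auto)
    show "0 \<le> lam" by fact
    show "M \<le> F 0"
      unfolding UM[symmetric] F_def
    proof (rule sum_mono)
      fix i
      have "U i \<le> clip_profile lam (U i) 0"
        unfolding clip_eq[OF l1] using U01[of i] l0 l1
        by (auto simp: le_divide_eq intro!: mult_left_le)
      then show "U i * d i \<le> d i * clip_profile lam (U i) 0" using dpos[of i] by (simp add: mult.commute)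
    qed
    show "F lam \<le> M"
      unfolding UM[symmetric] F_def
    proof (rule sum_mono)
      fix i
      have "(U i - lam) / (1 - lam) \<le> U i"
        using U01[of i] l0 l1 by (simp add: divide_le_eq algebra_simps mult_left_le)
      then have "clip_profile lam (U i) lam \<le> U i"
        unfolding clip_eq[OF l1] using U01[of i] by auto
      then show "d i * clip_profile lam (U i) lam \<le> U i * d i" using dpos[of i] by (simp add: mult.commute)
    qed
  qed
  have part2: "u' \<in> V01 \<and> mass w r u' = M \<and> (\<forall>v. v \<in> V01 \<and> mass w r v = M \<and> v \<noteq> u' \<longrightarrow> J u' < J v)"
    if Mnu: "M = F \<nu>" and u'_def: "u' = (\<lambda>i. clip_profile lam (U i) \<nu>)" for \<nu> u'
  proof (intro conjI allI impI)
    show "u' \<in> V01" unfolding V01_def u'_def using clip_01[OF l1] by blast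
    have massd: "mass w r v = (\<Sum>i\<in>UNIV. d i * v i)" for v
      unfolding mass_def ipV_def d_def by (simp add: mult.commute)
    show mu: "mass w r u' = M" unfolding massd Mnu F_def u'_def ..
    define G where "G = (\<lambda>v. \<Sum>i\<in>UNIV. d i * ((1-lam) * v i^2 - 2 * v i * U i + 2 * \<nu> * v i))"
    have JG: "J v = G v - 2 * \<nu> * mass w r v" for v
      unfolding J_def G_def massd normV_sq_def ipV_def U_def[symmetric] d_def
      by (simp add: sum_distrib_left sum_subtractf[symmetric] sum.distrib[symmetric] algebra_simps power2_eq_square)
    fix v assume v: "v \<in> V01 \<and> mass w r v = M \<and> v \<noteq> u'"
    have v01: "0 \<le> v i" "v i \<le> 1" for i using v unfolding V01_def by auto
    obtain k where k: "v k \<noteq> u' k" using v by blast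
    have pos: "0 < (\<Sum>i\<in>UNIV. d i * ((1-lam) * (v i - u' i)^2))"
    proof (rule sum_pos2)
      show "0 < d k * ((1-lam) * (v k - u' k)^2)" using dpos[of k] l1 k by simp
      show "0 \<le> d i * ((1-lam) * (v i - u' i)^2)" for i using dpos[of i] l1 by (simp add: less_imp_le)
    qed auto
    have "G u' + (\<Sum>i\<in>UNIV. d i * ((1-lam) * (v i - u' i)^2)) \<le> G v"
      unfolding G_def sum.distrib[symmetric] distrib_left[symmetric]
    proof (rule sum_mono)
      fix i
      have "(1-lam) * u' i^2 - 2 * u' i * U i + 2 * \<nu> * u' i + (1-lam) * (v i - u' i)^2 \<le> (1-lam) * v i^2 - 2 * v i * U i + 2 * \<nu> * v i"
        unfolding u'_def using coord[OF v01[of i] l0 l1, of "U i" \<nu>] by simp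
      then show "d i * ((1-lam) * u' i^2 - 2 * u' i * U i + 2 * \<nu> * u' i + (1-lam) * (v i - u' i)^2) \<le> d i * ((1-lam) * v i^2 - 2 * v i * U i + 2 * \<nu> * v i)"
        using dpos[of i] by (intro mult_left_mono) auto
    qed
    then show "J u' < J v" unfolding JG using pos mu v by simp
  qed
  show ?thesis
    unfolding FF Let_def using part1 part2 by metis
qed


end
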